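(* Let $\mathcal{K}=(\mathcal{D},\mathsf{O})$ be a $\mathcal{DBL}$ knowledge base over $V$ with $\mathcal{D}=(\mathcal{B}_1,\mathcal{B}_\rightarrow)$, let $c\in\mathfrak{C}$, and let $\phi$ be a context formula for $c$ with respect to $\mathsf{O}$. If $\delta_{\mathcal{B}_\rightarrow}(\phi)>0$, then $P_{\mathcal{K}}(c[\infty])=1$ (independently of $\mathcal{B}_1$).
   Context: An ontology language $\mathcal{L}$ consists of sets $\mathfrak{A}$ (axioms) and $\mathfrak{C}$ (consequences), a class $\mathfrak{O}$ of finite subsets of $\mathfrak{A}$ (ontologies) closed under subsets, a class $\mathfrak{I}$ of interpretations, and a relation $\models\subseteq\mathfrak{I}\times(\mathfrak{A}\cup\mathfrak{C})$; $\mathcal{O}\models c$ means every interpretation satisfying all axioms of $\mathcal{O}$ satisfies $c$. Let $V$ be a finite set of Boolean variables. A $V$-ontology is a finite set $\mathsf{O}$ of pairs $\langle\alpha:\kappa\rangle$ with $\alpha\in\mathfrak{A}$ and $\kappa$ a consistent set of literals over $V$, such that $\{\alpha\mid\langle\alpha:\kappa\rangle\in\mathsf{O}\}\in\mathfrak{O}$. For a valuation (world) $\mathcal{W}$ of $V$, $\mathsf{O}_{\mathcal{W}}:=\{\alpha\mid\langle\alpha:\kappa\rangle\in\mathsf{O},\ \mathcal{W}\models_p\kappa\}$. A context formula for $c$ w.r.t. $\mathsf{O}$ is a propositional formula $\phi$ over $V$ such that for every valuation $\mathcal{W}$ of $V$: $\mathsf{O}_{\mathcal{W}}\models c$ iff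 $\mathcal{W}\models_p\phi$. A two-slice BN (TBN) over $V$ is a pair $(G,\Phi)$ with $G$ a DAG on $V\cup V'$, $V'=\{x'\mid x\in V\}$, with no edges into elements of $V$, and $\Phi$ giving for each $x'\in V'$ a conditional distribution $P(x'\mid\pi(x'))$ given its parents. A DBN over $V$ is a pair $\mathcal{D}=(\mathcal{B}_1,\mathcal{B}_\rightarrow)$ with $\mathcal{B}_1$ a BN over $V$ and $\mathcal{B}_\rightarrow$ a TBN over $V$. The unraveling $\mathcal{B}_{1:t}$ is the BN over $V_1\cup\dots\cup V_t$ (copies $x_i$ of each $x\in V$) in which the nodes of $V_1$ have the structure and tables of $\mathcal{B}_1$, and for $2\le i\le t$ each $x_i$ has as parents the images of $\pi(x')$ in $\mathcal{B}_\rightarrow$ under $y\mapsto y_{i-1}$, $y'\mapsto y_i$, with the conditional table of $x'$. For a valuation $\mathcal{W}$ of $V_1\cup\dots\cup V_t$, $\mathcal{W}(i)$ denotes its restriction to $V_i$, viewed as a valuation of $V$. A $\mathcal{DBL}$ KB is a pair $\mathcal{K}=(\mathcal{D},\mathsf{O})$ with $\mathcal{D}$ a DBN over $V$ and $\mathsf{O}$ a $V$-ontology. The probability of observing $c$ within $t$ steps is $P_{\mathcal{K}}(c[1:t]):=\sum_{\mathcal{W}\,:\,\exists i\in\{1,\dots,t\}.\ \mathsf{O}_{\mathcal{W}(i)}\models c}P_{\mathcal{B}_{1:t}}(\mathcal{W})$, the sum over valuations $\mathcal{W}$ of $V_1\cup\dots\cup V_t$; this is nondecreasing in $t$ and bounded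 by 1, and the probability of eventually observing $c$ is $P_{\mathcal{K}}(c[\infty]):=\lim_{t\to\infty}P_{\mathcal{K}}(c[1:t])$. A TBN $\mathcal{B}$ over $V$ defines a time-homogeneous Markov chain on the finite set of valuations of $V$ with transition probabilities $P(\mathcal{W}'\mid\mathcal{W}):=\prod_{x'\in V'}P(x'\mid\pi(x'))$ evaluated with $V$ set according to $\mathcal{W}$ and $V'$ according to $\mathcal{W}'$. A distribution $P_W$ on valuations of $V$ is stationary if $\sum_{\mathcal{W}}P(\mathcal{V}\mid\mathcal{W})P_W(\mathcal{W})=P_W(\mathcal{V})$ for every valuation $\mathcal{V}$. Let $\Delta_{\mathcal{B}}$ be the set of stationary distributions, and for a propositional formula $\phi$ over $V$ let $\delta_{\mathcal{B}}(\phi):=\min_{P\in\Delta_{\mathcal{B}}}\sum_{\mathcal{W}\models_p\phi}P(\mathcal{W})$. *)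

theory Defs
  imports Complex_Main
begin

text \<open>An ontology language: axioms of type 'a (the set of axioms is UNIV),
  consequences of type 'c, a class Ont of ontologies (finite sets of axioms),
  a set Itp of interpretations, and satisfaction relations sa (axioms), sc (consequences).\<close>

definition ontology_language :: "'a set set \<Rightarrow> bool" where
  "ontology_language Ont \<longleftrightarrow> (\<forall>X\<in>Ont. finite X) \<and> (\<forall>X\<in>Ont. \<forall>Y. Y \<subseteq> X \<longrightarrow> Y \<in> Ont)"

definition entails :: "'i set \<Rightarrow> ('i \<Rightarrow> 'a \<Rightarrow> bool) \<Rightarrow> ('i \<Rightarrow> 'c \<Rightarrow> bool) \<Rightarrow> 'a set \<Rightarrow> 'c \<Rightarrow> bool" where
  "entails Itp sa sc X c \<longleftrightarrow> (\<forall>I\<in>Itp. (\<forall>\<alpha>\<in>X. sa I \<alpha>) \<longrightarrow> sc I c)"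

text \<open>Valuations (worlds) of V are represented by the set of variables that are true (a subset of V).
  A literal is a pair (x, b): x if b, otherwise the negation of x.\<close>

definition lits_consistent :: "'v set \<Rightarrow> ('v \<times> bool) set \<Rightarrow> bool" where
  "lits_consistent V \<kappa> \<longleftrightarrow> (\<forall>(x, b)\<in>\<kappa>. x \<in> V) \<and> \<not> (\<exists>x. (x, True) \<in> \<kappa> \<and> (x, False) \<in> \<kappa>)"

definition sat_lits :: "'v set \<Rightarrow> ('v \<times> bool) set \<Rightarrow> bool" where
  "sat_lits W \<kappa> \<longleftrightarrow> (\<forall>(x, b)\<in>\<kappa>. (x \<in> W) = b)"

definition V_ontology :: "'v set \<Rightarrow> 'a set set \<Rightarrow> ('a \<times> ('v \<times> bool) set) set \<Rightarrow> bool" where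
  "V_ontology V Ont Ov \<longleftrightarrow> finite Ov \<and> (\<forall>(\<alpha>, \<kappa>)\<in>Ov. lits_consistent V \<kappa>) \<and> fst ` Ov \<in> Ont"

definition restrict_ont :: "('a \<times> ('v \<times> bool) set) set \<Rightarrow> 'v set \<Rightarrow> 'a set" where
  "restrict_ont Ov W = {\<alpha>. \<exists>\<kappa>. (\<alpha>, \<kappa>) \<in> Ov \<and> sat_lits W \<kappa>}"

datatype 'v pform = PTrue | PFalse | PVar 'v | PNot "'v pform"
  | PAnd "'v pform" "'v pform" | POr "'v pform" "'v pform"

fun peval :: "'v set \<Rightarrow> 'v pform \<Rightarrow> bool" where
  "peval W PTrue = True"
| "peval W PFalse = False"
| "peval W (PVar x) = (x \<in> W)"
| "peval W (PNot f) = (\<not> peval W f)"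
| "peval W (PAnd f g) = (peval W f \<and> peval W g)"
| "peval W (POr f g) = (peval W f \<or> peval W g)"

fun atoms :: "'v pform \<Rightarrow> 'v set" where
  "atoms PTrue = {}"
| "atoms PFalse = {}"
| "atoms (PVar x) = {x}"
| "atoms (PNot f) = atoms f"
| "atoms (PAnd f g) = atoms f \<union> atoms g"
| "atoms (POr f g) = atoms f \<union> atoms g"

definition context_formula ::
  "'v set \<Rightarrow> 'i set \<Rightarrow> ('i \<Rightarrow> 'a \<Rightarrow> bool) \<Rightarrow> ('i \<Rightarrow> 'c \<Rightarrow> bool)
   \<Rightarrow> ('a \<times> ('v \<times> bool) set) set \<Rightarrow> 'c \<Rightarrow> 'v pform \<Rightarrow> bool" where
  "context_formula V Itp sa sc Ov c \<phi> \<longleftrightarrow> atoms \<phi> \<subseteq> V \<and>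
     (\<forall>W. W \<subseteq> V \<longrightarrow> (entails Itp sa sc (restrict_ont Ov W) c \<longleftrightarrow> peval W \<phi>))"

text \<open>A BN on node set N: parent function par, and cpt n S = probability that n is true
  given that exactly the parents in S (a subset of par n) are true.\<close>

definition bn_wf :: "'n set \<Rightarrow> ('n \<Rightarrow> 'n set) \<Rightarrow> ('n \<Rightarrow> 'n set \<Rightarrow> real) \<Rightarrow> bool" where
  "bn_wf N par cpt \<longleftrightarrow> finite N \<and> (\<forall>n\<in>N. par n \<subseteq> N)
     \<and> acyclic {(p, n). n \<in> N \<and> p \<in> par n}
     \<and> (\<forall>n\<in>N. \<forall>S. S \<subseteq> par n \<longrightarrow> 0 \<le> cpt n S \<and> cpt n S \<le> 1)"

definition bn_joint :: "'n set \<Rightarrow> ('n \<Rightarrow> 'n set) \<Rightarrow> ('n \<Rightarrow> 'n set \<Rightarrow> real) \<Rightarrow> 'n set \<Rightarrow> real" where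
  "bn_joint N par cpt W =
     (\<Prod>n\<in>N. if n \<in> W then cpt n (W \<inter> par n) else 1 - cpt n (W \<inter> par n))"

datatype 'v tnode = Cur 'v | Nxt 'v

text \<open>TBN over V: parT x = parents of x' (nodes among V and V'); no edges into V.
  cptT x S = probability that x' is true given the set S of true parents.\<close>

definition tbn_wf :: "'v set \<Rightarrow> ('v \<Rightarrow> 'v tnode set) \<Rightarrow> ('v \<Rightarrow> 'v tnode set \<Rightarrow> real) \<Rightarrow> bool" where
  "tbn_wf V parT cptT \<longleftrightarrow> finite V \<and> (\<forall>x\<in>V. parT x \<subseteq> Cur ` V \<union> Nxt ` V)
     \<and> acyclic {(p, Nxt x) | p x. x \<in> V \<and> p \<in> parT x}
     \<and> (\<forall>x\<in>V. \<forall>S. S \<subseteq> parT x \<longrightarrow> 0 \<le> cptT x S \<and> cptT x S \<le> 1)"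

definition tbn_trans :: "'v set \<Rightarrow> ('v \<Rightarrow> 'v tnode set) \<Rightarrow> ('v \<Rightarrow> 'v tnode set \<Rightarrow> real)
    \<Rightarrow> 'v set \<Rightarrow> 'v set \<Rightarrow> real" where
  "tbn_trans V parT cptT W W' =
     (\<Prod>x\<in>V. let S = {p \<in> parT x. case p of Cur y \<Rightarrow> y \<in> W | Nxt y \<Rightarrow> y \<in> W'}
             in if x \<in> W' then cptT x S else 1 - cptT x S)"

definition stationary :: "'v set \<Rightarrow> ('v \<Rightarrow> 'v tnode set) \<Rightarrow> ('v \<Rightarrow> 'v tnode set \<Rightarrow> real)
    \<Rightarrow> ('v set \<Rightarrow> real) \<Rightarrow> bool" where
  "stationary V parT cptT P \<longleftrightarrow> (\<forall>W\<in>Pow V. 0 \<le> P W) \<and> (\<Sum>W\<in>Pow V. P W) = 1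
     \<and> (\<forall>U\<in>Pow V. (\<Sum>W\<in>Pow V. tbn_trans V parT cptT W U * P W) = P U)"

text \<open>delta_B(phi): the minimum over stationary distributions of the mass of phi-worlds
  (the set is compact and nonempty, so the infimum is attained).\<close>

definition delta :: "'v set \<Rightarrow> ('v \<Rightarrow> 'v tnode set) \<Rightarrow> ('v \<Rightarrow> 'v tnode set \<Rightarrow> real)
    \<Rightarrow> 'v pform \<Rightarrow> real" where
  "delta V parT cptT \<phi> =
     Inf {(\<Sum>W\<in>{W\<in>Pow V. peval W \<phi>}. P W) | P. stationary V parT cptT P}"

text \<open>Node (x, i) is the copy x_i of x in V_i.\<close>

definition unr_par :: "('v \<Rightarrow> 'v set) \<Rightarrow> ('v \<Rightarrow> 'v tnode set) \<Rightarrow> 'v \<times> nat \<Rightarrow> ('v \<times> nat) set" where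
  "unr_par par1 parT = (\<lambda>(x, i).
     if i = 1 then (\<lambda>y. (y, 1)) ` par1 x
     else {(y, i - 1) | y. Cur y \<in> parT x} \<union> {(y, i) | y. Nxt y \<in> parT x})"

definition unr_cpt :: "('v \<Rightarrow> 'v set \<Rightarrow> real) \<Rightarrow> ('v \<Rightarrow> 'v tnode set \<Rightarrow> real)
    \<Rightarrow> 'v \<times> nat \<Rightarrow> ('v \<times> nat) set \<Rightarrow> real" where
  "unr_cpt cpt1 cptT = (\<lambda>(x, i) S.
     if i = 1 then cpt1 x {y. (y, 1) \<in> S}
     else cptT x ({Cur y | y. (y, i - 1) \<in> S} \<union> {Nxt y | y. (y, i) \<in> S}))"

definition slice :: "('v \<times> nat) set \<Rightarrow> nat \<Rightarrow> 'v set" where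
  "slice W i = {x. (x, i) \<in> W}"

definition prob_within ::
  "'v set \<Rightarrow> ('v \<Rightarrow> 'v set) \<Rightarrow> ('v \<Rightarrow> 'v set \<Rightarrow> real)
   \<Rightarrow> ('v \<Rightarrow> 'v tnode set) \<Rightarrow> ('v \<Rightarrow> 'v tnode set \<Rightarrow> real)
   \<Rightarrow> 'i set \<Rightarrow> ('i \<Rightarrow> 'a \<Rightarrow> bool) \<Rightarrow> ('i \<Rightarrow> 'c \<Rightarrow> bool)
   \<Rightarrow> ('a \<times> ('v \<times> bool) set) set \<Rightarrow> 'c \<Rightarrow> nat \<Rightarrow> real" where
  "prob_within V par1 cpt1 parT cptT Itp sa sc Ov c t =
     (\<Sum>W\<in>{W. W \<subseteq> V \<times> {1..t} \<and>
              (\<exists>i\<in>{1..t}. entails Itp sa sc (restrict_ont Ov (slice W i)) c)}.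
        bn_joint (V \<times> {1..t}) (unr_par par1 parT) (unr_cpt cpt1 cptT) W)"

end

theory Submission
  imports Defs
begin

lemma sink_exists:
  assumes "finite N" "N \<noteq> {}" "acyclic {(q,n). n\<in>N \<and> q \<in> par n}"
  shows "\<exists>s\<in>N. \<forall>n\<in>N. s \<notin> par n"
proof -
  define r where "r = {(q,n). n\<in>N \<and> q \<in> par n \<and> q \<in> N}"
  have "r \<subseteq> N \<times> N" unfolding r_def by blast
  then have fin: "finite r" using assms(1) finite_subset by blast
  have "r \<subseteq> {(q,n). n\<in>N \<and> q \<in> par n}" unfolding r_def by blast
  then have ac: "acyclic r" using acyclic_subset assms(3) by blast
  have w: "wf (r\<inverse>)" using finite_acyclic_wf_converse[OF fin ac] .
  obtain x where "x \<in> N" using assms(2) by blast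
  then obtain z where z: "z \<in> N" "\<And>y. (y,z) \<in> r\<inverse> \<Longrightarrow> y \<notin> N"
    using wfE_min[OF w] by metis
  have "\<forall>n\<in>N. z \<notin> par n"
  proof (intro ballI notI)
    fix n assume "n \<in> N" "z \<in> par n"
    then have "(n,z) \<in> r\<inverse>" using z(1) unfolding r_def by blast
    then show False using z(2) \<open>n \<in> N\<close> by blast
  qed
  then show ?thesis using z(1) by blast
qed
lemma bn_sum1:
  assumes "finite N" "acyclic {(q,n). n\<in>N \<and> q \<in> par n}"
    "\<forall>n\<in>N. \<forall>W. p n W = p n (W \<inter> par n)"
  shows "(\<Sum>W\<in>Pow N. \<Prod>n\<in>N. if n\<in>W then p n W else 1 - p n W) = (1::real)"
  using assms
proof (induction N rule: finite_psubset_induct)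
  case (psubset N)
  show ?case
  proof (cases "N = {}")
    case True then show ?thesis by simp
  next
    case False
    obtain s where s: "s \<in> N" "\<forall>n\<in>N. s \<notin> par n"
      using sink_exists[OF psubset(1) False psubset(3)] by blast
    let ?N = "N - {s}"
    define f where "f W = (\<Prod>n\<in>?N. if n\<in>W then p n W else 1 - p n W)" for W
    have IH: "(\<Sum>W\<in>Pow ?N. f W) = 1"
      unfolding f_def
    proof (rule psubset(2))
      show "?N \<subset> N" using s by auto
      show "acyclic {(q,n). n\<in>?N \<and> q \<in> par n}"
        by (rule acyclic_subset[OF psubset(3)]) auto
      show "\<forall>n\<in>?N. \<forall>W. p n W = p n (W \<inter> par n)" using psubset(4) by blast
    qed
    have ss: "s \<notin> par s" using s by blast
    have fins: "finite ?N" using psubset(1) by simp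
    have Neq: "N = insert s ?N" using s by auto
    have key1: "(\<Prod>n\<in>N. if n\<in>W then p n W else 1 - p n W) = (1 - p s W) * f W"
      if "W \<in> Pow ?N" for W
    proof -
      have "(\<Prod>n\<in>N. if n\<in>W then p n W else 1 - p n W) = (if s\<in>W then p s W else 1 - p s W) * f W"
        unfolding f_def by (subst Neq, subst prod.insert[OF fins]) auto
      then show ?thesis using that by auto
    qed
    have key2: "(\<Prod>n\<in>N. if n\<in>insert s W then p n (insert s W) else 1 - p n (insert s W)) = p s W * f W"
      if "W \<in> Pow ?N" for W
    proof -
      have pe: "p n (insert s W) = p n W" if "n \<in> N" for n
      proof -
        have "p n (insert s W) = p n (insert s W \<inter> par n)" using psubset(4) that by blast
        also have "insert s W \<inter> par n = W \<inter> par n" using s that by auto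
        also have "p n (W \<inter> par n) = p n W" using psubset(4) that by metis
        finally show ?thesis .
      qed
      have "(\<Prod>n\<in>N. if n\<in>insert s W then p n (insert s W) else 1 - p n (insert s W))
          = (\<Prod>n\<in>N. if n\<in>insert s W then p n W else 1 - p n W)"
        by (rule prod.cong) (auto simp: pe)
      also have "\<dots> = p s W * (\<Prod>n\<in>?N. if n\<in>insert s W then p n W else 1 - p n W)"
        by (subst Neq, subst prod.insert[OF fins]) auto
      also have "(\<Prod>n\<in>?N. if n\<in>insert s W then p n W else 1 - p n W) = f W"
        unfolding f_def by (rule prod.cong) auto
      finally show ?thesis .
    qed
    have "Pow N = Pow ?N \<union> insert s ` Pow ?N" by (subst Neq, rule Pow_insert)
    moreover have "Pow ?N \<inter> insert s ` Pow ?N = {}" by auto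
    moreover have "inj_on (insert s) (Pow ?N)" unfolding inj_on_def by auto
    ultimately have "(\<Sum>W\<in>Pow N. \<Prod>n\<in>N. if n\<in>W then p n W else 1 - p n W)
       = (\<Sum>W\<in>Pow ?N. \<Prod>n\<in>N. if n\<in>W then p n W else 1 - p n W)
       + (\<Sum>W\<in>Pow ?N. \<Prod>n\<in>N. if n\<in>insert s W then p n (insert s W) else 1 - p n (insert s W))"
      using fins by (simp add: sum.union_disjoint sum.reindex)
    also have "\<dots> = (\<Sum>W\<in>Pow ?N. (1 - p s W) * f W + p s W * f W)"
      unfolding sum.distrib[symmetric] by (rule sum.cong[OF refl], simp only: key1 key2)
    also have "\<dots> = (\<Sum>W\<in>Pow ?N. f W)" by (simp add: algebra_simps)
    finally show ?thesis using IH by simp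
  qed
qed

lemma real_subseq:
  fixes s :: "nat \<Rightarrow> real"
  assumes "\<And>n. \<bar>s n\<bar> \<le> B"
  shows "\<exists>r l. strict_mono r \<and> (\<lambda>n. s (r n)) \<longlonglongrightarrow> l"
proof -
  obtain r where r: "strict_mono r" "monoseq (\<lambda>n. s (r n))" using seq_monosub by blast
  have "Bseq (\<lambda>n. s (r n))" by (rule BseqI'[of _ B]) (use assms in auto)
  then have "convergent (\<lambda>n. s (r n))" using Bseq_monoseq_convergent r(2) by blast
  then show ?thesis using r(1) unfolding convergent_def by blast
qed

lemma finite_subseq:
  fixes f :: "nat \<Rightarrow> 's \<Rightarrow> real"
  assumes "finite S" "\<And>n s. s \<in> S \<Longrightarrow> \<bar>f n s\<bar> \<le> B"
  shows "\<exists>r l. strict_mono r \<and> (\<forall>s\<in>S. (\<lambda>n. f (r n) s) \<longlonglongrightarrow> l s)"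
  using assms
proof (induction S rule: finite_induct)
  case empty
  show ?case by (rule exI[of _ id]) (auto simp: strict_mono_def)
next
  case (insert x S)
  obtain r l where rl: "strict_mono r" "\<forall>s\<in>S. (\<lambda>n. f (r n) s) \<longlonglongrightarrow> l s"
    using insert.IH insert.prems by blast
  obtain r2 lx where r2: "strict_mono r2" "(\<lambda>n. f (r (r2 n)) x) \<longlonglongrightarrow> lx"
    using real_subseq[of "\<lambda>n. f (r n) x" B] insert.prems by blast
  have sm: "strict_mono (r \<circ> r2)" using rl(1) r2(1) by (rule strict_mono_o)
  have "\<forall>s\<in>insert x S. (\<lambda>n. f ((r \<circ> r2) n) s) \<longlonglongrightarrow> (l(x := lx)) s"
  proof
    fix s assume "s \<in> insert x S"
    show "(\<lambda>n. f ((r \<circ> r2) n) s) \<longlonglongrightarrow> (l(x := lx)) s"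
    proof (cases "s = x")
      case True then show ?thesis using r2(2) by simp
    next
      case False
      then have "s \<in> S" using \<open>s \<in> insert x S\<close> by simp
      then have "(\<lambda>n. f (r n) s) \<longlonglongrightarrow> l s" using rl(2) by blast
      from LIMSEQ_subseq_LIMSEQ[OF this r2(1)] show ?thesis using False by (simp add: o_def)
    qed
  qed
  then show ?case using sm by blast
qed

fun Fw :: "'s set \<Rightarrow> ('s \<Rightarrow> 's \<Rightarrow> real) \<Rightarrow> ('s \<Rightarrow> real) \<Rightarrow> ('s \<Rightarrow> bool) \<Rightarrow> nat \<Rightarrow> 's \<Rightarrow> real" where
  "Fw S T mu Q 0 U = (if Q U then mu U else 0)"
| "Fw S T mu Q (Suc t) U = (if Q U then (\<Sum>W\<in>S. Fw S T mu Q t W * T W U) else 0)"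

context
  fixes S :: "'s set" and T :: "'s \<Rightarrow> 's \<Rightarrow> real" and mu :: "'s \<Rightarrow> real" and Q :: "'s \<Rightarrow> bool"
  assumes finS: "finite S"
    and Tnn: "\<And>W U. W \<in> S \<Longrightarrow> U \<in> S \<Longrightarrow> 0 \<le> T W U"
    and Trow: "\<And>W. W \<in> S \<Longrightarrow> (\<Sum>U\<in>S. T W U) = 1"
    and munn: "\<And>U. U \<in> S \<Longrightarrow> 0 \<le> mu U"
    and musum: "(\<Sum>U\<in>S. mu U) = 1"
begin

abbreviation "F \<equiv> Fw S T mu Q"

lemma F_nn: "U \<in> S \<Longrightarrow> 0 \<le> F t U"
proof (induction t arbitrary: U)
  case 0 then show ?case using munn by simp
next
  case (Suc t) then show ?case using Tnn by (auto intro!: sum_nonneg)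
qed

lemma m_dec: "(\<Sum>U\<in>S. F (Suc t) U) \<le> (\<Sum>U\<in>S. F t U)"
proof -
  have "(\<Sum>U\<in>S. F (Suc t) U) \<le> (\<Sum>U\<in>S. \<Sum>W\<in>S. F t W * T W U)"
    by (rule sum_mono) (auto intro!: sum_nonneg mult_nonneg_nonneg F_nn Tnn)
  also have "\<dots> = (\<Sum>W\<in>S. \<Sum>U\<in>S. F t W * T W U)" by (rule sum.swap)
  also have "\<dots> = (\<Sum>W\<in>S. F t W * (\<Sum>U\<in>S. T W U))" by (simp add: sum_distrib_left)
  also have "\<dots> = (\<Sum>W\<in>S. F t W)" by (rule sum.cong) (auto simp: Trow)
  finally show ?thesis .
qed

lemma m_le1: "(\<Sum>U\<in>S. F t U) \<le> 1"
proof (induction t)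
  case 0
  have "(\<Sum>U\<in>S. F 0 U) \<le> (\<Sum>U\<in>S. mu U)" by (rule sum_mono) (auto simp: munn)
  then show ?case using musum by simp
next
  case (Suc t) then show ?case using m_dec[of t] by linarith
qed

lemma F_total: "(\<Sum>U\<in>S. Fw S T mu (\<lambda>_. True) t U) = 1"
proof (induction t)
  case 0 then show ?case using musum by simp
next
  case (Suc t)
  have "(\<Sum>U\<in>S. Fw S T mu (\<lambda>_. True) (Suc t) U) = (\<Sum>U\<in>S. \<Sum>W\<in>S. Fw S T mu (\<lambda>_. True) t W * T W U)"
    by simp
  also have "\<dots> = (\<Sum>W\<in>S. \<Sum>U\<in>S. Fw S T mu (\<lambda>_. True) t W * T W U)" by (rule sum.swap)
  also have "\<dots> = (\<Sum>W\<in>S. Fw S T mu (\<lambda>_. True) t W * (\<Sum>U\<in>S. T W U))" by (simp only: sum_distrib_left)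
  also have "\<dots> = (\<Sum>W\<in>S. Fw S T mu (\<lambda>_. True) t W)" by (rule sum.cong) (auto simp: Trow)
  finally show ?case using Suc.IH by simp
qed

lemma F_le1: "U \<in> S \<Longrightarrow> F t U \<le> 1"
  using member_le_sum[of U S "F t"] F_nn finS m_le1[of t] by fastforce

lemma F_tends0:
  assumes pos: "\<And>P. (\<forall>U\<in>S. 0 \<le> P U) \<Longrightarrow> (\<Sum>U\<in>S. P U) = 1
      \<Longrightarrow> (\<forall>U\<in>S. (\<Sum>W\<in>S. T W U * P W) = P U) \<Longrightarrow> (\<Sum>U\<in>{U\<in>S. \<not> Q U}. P U) > 0"
  shows "(\<lambda>t. \<Sum>U\<in>S. F t U) \<longlonglongrightarrow> 0"
proof -
  define m where "m t = (\<Sum>U\<in>S. F t U)" for t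
  have dec: "decseq m" unfolding m_def by (rule decseq_SucI) (rule m_dec)
  have mnn: "0 \<le> m t" for t unfolding m_def by (auto intro!: sum_nonneg F_nn)
  have "Bseq m" by (rule BseqI'[of _ 1]) (use mnn m_le1 in \<open>auto simp: m_def\<close>)
  then have "convergent m" using Bseq_monoseq_convergent dec decseq_imp_monoseq by blast
  then obtain L where L: "m \<longlonglongrightarrow> L" unfolding convergent_def by blast
  have Lle: "L \<le> m t" for t using decseq_ge[OF dec L] .
  have L0: "0 \<le> L" using LIMSEQ_le_const[OF L] mnn by blast
  show ?thesis
  proof (cases "L = 0")
    case True
    have "m = (\<lambda>t. \<Sum>U\<in>S. F t U)" by (simp add: m_def fun_eq_iff)
    then show ?thesis using L True by simp
  next
    case False
    then have Lpos: "L > 0" using L0 by simp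
    define nu where "nu n U = (\<Sum>t<Suc n. F t U) / real (Suc n)" for n U
    have nu_b: "\<bar>nu n U\<bar> \<le> 1" if "U \<in> S" for n U
    proof -
      have "0 \<le> (\<Sum>t<Suc n. F t U)" using F_nn that by (intro sum_nonneg) auto
      moreover have "(\<Sum>t<Suc n. F t U) \<le> (\<Sum>t<Suc n. 1)" using F_le1 that by (intro sum_mono) auto
      ultimately show ?thesis unfolding nu_def by (simp add: divide_le_eq)
    qed
    obtain r l where rl: "strict_mono r" "\<forall>U\<in>S. (\<lambda>n. nu (r n) U) \<longlonglongrightarrow> l U"
      using finite_subseq[of S nu 1, OF finS nu_b] by blast
    have lnn: "0 \<le> l U" if "U \<in> S" for U
    proof -
      have "0 \<le> nu n U" for n
      proof -
        have "0 \<le> (\<Sum>t<Suc n. F t U)" using F_nn that by (intro sum_nonneg) auto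
        then show ?thesis unfolding nu_def by simp
      qed
      then show ?thesis using LIMSEQ_le_const[of "\<lambda>n. nu (r n) U" "l U" 0] rl(2) that by blast
    qed
    have rec: "nu n U + (F (Suc n) U - F 0 U) / real (Suc n)
        = (if Q U then (\<Sum>W\<in>S. nu n W * T W U) else 0)" if "U \<in> S" for n U
    proof -
      have "(\<Sum>t<Suc n. F (Suc t) U) = (\<Sum>t<Suc n. F t U) + F (Suc n) U - F 0 U"
        using sum.lessThan_Suc_shift[of "\<lambda>t. F t U" "Suc n"] by simp
      moreover have "(\<Sum>t<Suc n. F (Suc t) U)
          = (if Q U then (\<Sum>W\<in>S. (\<Sum>t<Suc n. F t W) * T W U) else 0)"
      proof (cases "Q U")
        case True
        have "(\<Sum>t<Suc n. F (Suc t) U) = (\<Sum>t<Suc n. \<Sum>W\<in>S. F t W * T W U)"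
          using True by simp
        also have "\<dots> = (\<Sum>W\<in>S. \<Sum>t<Suc n. F t W * T W U)" by (rule sum.swap)
        also have "\<dots> = (\<Sum>W\<in>S. (\<Sum>t<Suc n. F t W) * T W U)"
          by (rule sum.cong[OF refl]) (rule sum_distrib_right[symmetric])
        finally show ?thesis using True by simp
      qed simp
      ultimately have "(\<Sum>t<Suc n. F t U) + F (Suc n) U - F 0 U
          = (if Q U then (\<Sum>W\<in>S. (\<Sum>t<Suc n. F t W) * T W U) else 0)" by simp
      then have e1: "((\<Sum>t<Suc n. F t U) + F (Suc n) U - F 0 U) / real (Suc n)
          = (if Q U then (\<Sum>W\<in>S. (\<Sum>t<Suc n. F t W) * T W U) else 0) / real (Suc n)" by simp
      have e2: "(if Q U then (\<Sum>W\<in>S. nu n W * T W U) else 0)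
          = (if Q U then (\<Sum>W\<in>S. (\<Sum>t<Suc n. F t W) * T W U) else 0) / real (Suc n)"
        unfolding nu_def by (simp add: sum_divide_distrib)
      have e3: "nu n U + (F (Suc n) U - F 0 U) / real (Suc n)
          = ((\<Sum>t<Suc n. F t U) + F (Suc n) U - F 0 U) / real (Suc n)"
        unfolding nu_def by (simp add: add_divide_distrib diff_divide_distrib)
      show ?thesis using e1 e2 e3 by simp
    qed
    have lrec: "l U = (if Q U then (\<Sum>W\<in>S. l W * T W U) else 0)" if "U \<in> S" for U
    proof -
      have e: "(\<lambda>n. (F (Suc (r n)) U - F 0 U) / real (Suc (r n))) \<longlonglongrightarrow> 0"
      proof -
        have b: "\<bar>F (Suc (r n)) U - F 0 U\<bar> \<le> 1" for n
          using F_nn[OF that, of "Suc (r n)"] F_nn[OF that, of 0] F_le1[OF that, of "Suc (r n)"] F_le1[OF that, of 0]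
          by linarith
        have "(\<lambda>n. 1 / real (Suc (r n))) \<longlonglongrightarrow> 0"
          using LIMSEQ_subseq_LIMSEQ[OF LIMSEQ_inverse_real_of_nat rl(1)]
          by (simp add: o_def inverse_eq_divide)
        then show ?thesis
        proof (rule tendsto_0_le[where K=1])
          show "\<forall>\<^sub>F n in sequentially. norm ((F (Suc (r n)) U - F 0 U) / real (Suc (r n)))
              \<le> norm (1 / real (Suc (r n))) * 1"
          proof (intro always_eventually allI)
            fix n
            have "\<bar>F (Suc (r n)) U - F 0 U\<bar> / real (Suc (r n)) \<le> 1 / real (Suc (r n))"
              using b[of n] by (intro divide_right_mono) auto
            then show "norm ((F (Suc (r n)) U - F 0 U) / real (Suc (r n)))
              \<le> norm (1 / real (Suc (r n))) * 1" by simp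
          qed
        qed
      qed
      have A1: "(\<lambda>n. nu (r n) U) \<longlonglongrightarrow> l U" using rl(2) that by blast
      have A: "(\<lambda>n. nu (r n) U + (F (Suc (r n)) U - F 0 U) / real (Suc (r n))) \<longlonglongrightarrow> l U + 0"
        by (rule tendsto_add[OF A1 e])
      have B: "(\<lambda>n. nu (r n) U + (F (Suc (r n)) U - F 0 U) / real (Suc (r n)))
          = (\<lambda>n. if Q U then (\<Sum>W\<in>S. nu (r n) W * T W U) else 0)"
        by (rule ext) (rule rec[OF that])
      have C: "(\<lambda>n. if Q U then (\<Sum>W\<in>S. nu (r n) W * T W U) else 0) \<longlonglongrightarrow>
          (if Q U then (\<Sum>W\<in>S. l W * T W U) else 0)"
      proof (cases "Q U")
        case True
        have "(\<lambda>n. \<Sum>W\<in>S. nu (r n) W * T W U) \<longlonglongrightarrow> (\<Sum>W\<in>S. l W * T W U)"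
        proof (rule tendsto_sum)
          fix W assume "W \<in> S"
          then have "(\<lambda>n. nu (r n) W) \<longlonglongrightarrow> l W" using rl(2) by blast
          then show "(\<lambda>n. nu (r n) W * T W U) \<longlonglongrightarrow> l W * T W U"
            by (rule tendsto_mult[OF _ tendsto_const])
        qed
        then show ?thesis using True by (simp only: if_True)
      next
        case False then show ?thesis by (simp only: if_False tendsto_const)
      qed
      have "(\<lambda>n. if Q U then (\<Sum>W\<in>S. nu (r n) W * T W U) else 0) \<longlonglongrightarrow> l U"
        using A by (simp only: B add_0_right)
      from LIMSEQ_unique[OF this C] show ?thesis .
    qed
    have lsum: "L \<le> (\<Sum>U\<in>S. l U)"
    proof -
      have "(\<lambda>n. \<Sum>U\<in>S. nu (r n) U) \<longlonglongrightarrow> (\<Sum>U\<in>S. l U)"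
        using rl(2) by (auto intro!: tendsto_sum)
      moreover have "L \<le> (\<Sum>U\<in>S. nu n U)" for n
      proof -
        have "(\<Sum>U\<in>S. nu n U) = (\<Sum>t<Suc n. m t) / real (Suc n)"
          unfolding nu_def m_def by (simp add: sum_divide_distrib[symmetric] sum.swap[of _ S])
        moreover have "(\<Sum>t<Suc n. L) \<le> (\<Sum>t<Suc n. m t)" by (rule sum_mono) (rule Lle)
        ultimately show ?thesis by (simp add: le_divide_eq mult.commute)
      qed
      ultimately show ?thesis using LIMSEQ_le_const by blast
    qed
    define g where "g U = (\<Sum>W\<in>S. l W * T W U)" for U
    have gnn: "0 \<le> g U" if "U \<in> S" for U
      unfolding g_def using that lnn Tnn by (auto intro!: sum_nonneg)
    have gsum: "(\<Sum>U\<in>S. g U) = (\<Sum>U\<in>S. l U)"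
    proof -
      have "(\<Sum>U\<in>S. g U) = (\<Sum>W\<in>S. l W * (\<Sum>U\<in>S. T W U))"
      proof -
        have "(\<Sum>U\<in>S. g U) = (\<Sum>U\<in>S. \<Sum>W\<in>S. l W * T W U)" unfolding g_def by (rule refl)
        also have "\<dots> = (\<Sum>W\<in>S. \<Sum>U\<in>S. l W * T W U)" by (rule sum.swap)
        also have "\<dots> = (\<Sum>W\<in>S. l W * (\<Sum>U\<in>S. T W U))" by (simp only: sum_distrib_left)
        finally show ?thesis .
      qed
      also have "\<dots> = (\<Sum>W\<in>S. l W)" by (rule sum.cong) (auto simp: Trow)
      finally show ?thesis .
    qed
    have split1: "(\<Sum>U\<in>S. g U) = (\<Sum>U\<in>{U\<in>S. Q U}. g U) + (\<Sum>U\<in>{U\<in>S. \<not> Q U}. g U)"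
    proof -
      have "S = {U\<in>S. Q U} \<union> {U\<in>S. \<not> Q U}" by blast
      then have "(\<Sum>U\<in>S. g U) = (\<Sum>U\<in>{U\<in>S. Q U} \<union> {U\<in>S. \<not> Q U}. g U)" by (rule arg_cong)
      also have "\<dots> = (\<Sum>U\<in>{U\<in>S. Q U}. g U) + (\<Sum>U\<in>{U\<in>S. \<not> Q U}. g U)"
        by (rule sum.union_disjoint) (use finS in auto)
      finally show ?thesis .
    qed
    have split2: "(\<Sum>U\<in>S. l U) = (\<Sum>U\<in>{U\<in>S. Q U}. l U) + (\<Sum>U\<in>{U\<in>S. \<not> Q U}. l U)"
    proof -
      have "S = {U\<in>S. Q U} \<union> {U\<in>S. \<not> Q U}" by blast
      then have "(\<Sum>U\<in>S. l U) = (\<Sum>U\<in>{U\<in>S. Q U} \<union> {U\<in>S. \<not> Q U}. l U)" by (rule arg_cong)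
      also have "\<dots> = (\<Sum>U\<in>{U\<in>S. Q U}. l U) + (\<Sum>U\<in>{U\<in>S. \<not> Q U}. l U)"
        by (rule sum.union_disjoint) (use finS in auto)
      finally show ?thesis .
    qed
    have lQ: "(\<Sum>U\<in>{U\<in>S. Q U}. l U) = (\<Sum>U\<in>{U\<in>S. Q U}. g U)"
    proof (rule sum.cong[OF refl])
      fix U assume "U \<in> {U\<in>S. Q U}"
      then show "l U = g U" using lrec[of U] unfolding g_def by simp
    qed
    have lnQ: "(\<Sum>U\<in>{U\<in>S. \<not> Q U}. l U) = 0"
    proof (rule sum.neutral, rule ballI)
      fix U assume "U \<in> {U\<in>S. \<not> Q U}"
      then show "l U = 0" using lrec[of U] by simp
    qed
    have "(\<Sum>U\<in>{U\<in>S. \<not> Q U}. g U) = 0"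
      using split1 split2 lQ lnQ gsum by linarith
    then have g0: "g U = 0" if "U \<in> S" "\<not> Q U" for U
      using sum_nonneg_eq_0_iff[of "{U\<in>S. \<not> Q U}" g] finS gnn that by auto
    have lg: "l U = g U" if "U \<in> S" for U
      using lrec[OF that] g0[OF that] unfolding g_def by (cases "Q U") auto
    define Z where "Z = (\<Sum>U\<in>S. l U)"
    have Zpos: "Z > 0" using lsum Lpos Z_def by linarith
    define P where "P U = l U / Z" for U
    have "(\<Sum>U\<in>{U\<in>S. \<not> Q U}. P U) > 0"
    proof (rule pos)
      show "\<forall>U\<in>S. 0 \<le> P U" using lnn Zpos by (simp add: P_def)
      show "(\<Sum>U\<in>S. P U) = 1" using Zpos unfolding P_def Z_def by (simp add: sum_divide_distrib[symmetric])
      show "\<forall>U\<in>S. (\<Sum>W\<in>S. T W U * P W) = P U"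
      proof
        fix U assume "U \<in> S"
        have "(\<Sum>W\<in>S. T W U * P W) = g U / Z"
          unfolding P_def g_def by (simp add: sum_divide_distrib mult.commute)
        then show "(\<Sum>W\<in>S. T W U * P W) = P U" using lg[OF \<open>U \<in> S\<close>] P_def by simp
      qed
    qed
    moreover have "(\<Sum>U\<in>{U\<in>S. \<not> Q U}. P U) = 0"
      unfolding P_def
    proof (rule sum.neutral, rule ballI)
      fix U assume "U \<in> {U\<in>S. \<not> Q U}"
      then show "l U / Z = 0" using lrec[of U] by simp
    qed
    ultimately show ?thesis by simp
  qed
qed

end

lemma unr_par_idx: "(y,j) \<in> unr_par par1 parT (x,i) \<Longrightarrow> j \<le> i"
  unfolding unr_par_def by (auto split: if_splits)

lemma slice_mono: "W \<subseteq> V \<times> I \<Longrightarrow> slice W i \<subseteq> V"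
  unfolding slice_def by auto

definition J where
  "J V par1 cpt1 parT cptT t W = bn_joint (V \<times> {1..t}) (unr_par par1 parT) (unr_cpt cpt1 cptT) W"

lemma tbn_set_eq:
  assumes "t \<ge> 1"
  shows "{Cur y | y. (y, Suc t - 1) \<in> W \<inter> unr_par par1 parT (x, Suc t)}
       \<union> {Nxt y | y. (y, Suc t) \<in> W \<inter> unr_par par1 parT (x, Suc t)}
     = {p \<in> parT x. case p of Cur y \<Rightarrow> y \<in> slice W t | Nxt y \<Rightarrow> y \<in> slice W (Suc t)}"
  using assms unfolding unr_par_def slice_def
  by (auto split: tnode.splits) (metis tnode.exhaust)+

lemma J_Suc:
  assumes "t \<ge> 1" "W \<subseteq> V \<times> {1..Suc t}" "finite V"
  shows "J V par1 cpt1 parT cptT (Suc t) W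
     = J V par1 cpt1 parT cptT t (W \<inter> V \<times> {1..t}) * tbn_trans V parT cptT (slice W t) (slice W (Suc t))"
proof -
  define fac where "fac W n = (if n \<in> W then unr_cpt cpt1 cptT n (W \<inter> unr_par par1 parT n)
      else 1 - unr_cpt cpt1 cptT n (W \<inter> unr_par par1 parT n))" for W n
  have J_fac: "J V par1 cpt1 parT cptT s X = (\<Prod>n\<in>V \<times> {1..s}. fac X n)" for s X
    unfolding J_def bn_joint_def fac_def by (rule refl)
  have split: "V \<times> {1..Suc t} = V \<times> {1..t} \<union> V \<times> {Suc t}" by auto
  have disj: "V \<times> {1..t} \<inter> V \<times> {Suc t} = {}" by auto
  have fe: "fac W n = fac (W \<inter> V \<times> {1..t}) n" if nin: "n \<in> V \<times> {1..t}" for n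
  proof -
    obtain x i where n: "n = (x,i)" "x \<in> V" "1 \<le> i" "i \<le> t" using nin by (cases n) auto
    have "W \<inter> unr_par par1 parT n = (W \<inter> V \<times> {1..t}) \<inter> unr_par par1 parT n"
    proof
      show "W \<inter> unr_par par1 parT n \<subseteq> (W \<inter> V \<times> {1..t}) \<inter> unr_par par1 parT n"
      proof
        fix z assume z: "z \<in> W \<inter> unr_par par1 parT n"
        obtain y j where zz: "z = (y,j)" by (cases z)
        have "j \<le> i" using z zz n(1) unr_par_idx by fastforce
        moreover have "y \<in> V" "1 \<le> j" using z zz assms(2) by auto
        ultimately show "z \<in> (W \<inter> V \<times> {1..t}) \<inter> unr_par par1 parT n" using z zz n(4) by auto
      qed
    qed auto
    moreover have "n \<in> W \<longleftrightarrow> n \<in> W \<inter> V \<times> {1..t}" using nin by auto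
    ultimately show ?thesis unfolding fac_def by simp
  qed
  have p1: "(\<Prod>n\<in>V \<times> {1..t}. fac W n) = J V par1 cpt1 parT cptT t (W \<inter> V \<times> {1..t})"
    unfolding J_fac by (rule prod.cong[OF refl]) (rule fe)
  have p2: "(\<Prod>n\<in>V \<times> {Suc t}. fac W n) = tbn_trans V parT cptT (slice W t) (slice W (Suc t))"
  proof -
    have "V \<times> {Suc t} = (\<lambda>x. (x, Suc t)) ` V" by auto
    moreover have "inj_on (\<lambda>x. (x, Suc t)) V" by (auto simp: inj_on_def)
    ultimately have "(\<Prod>n\<in>V \<times> {Suc t}. fac W n) = (\<Prod>x\<in>V. fac W (x, Suc t))"
      by (simp add: prod.reindex)
    also have "\<dots> = tbn_trans V parT cptT (slice W t) (slice W (Suc t))"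
      unfolding tbn_trans_def
    proof (rule prod.cong[OF refl])
      fix x assume "x \<in> V"
      have c: "unr_cpt cpt1 cptT (x, Suc t) (W \<inter> unr_par par1 parT (x, Suc t))
          = cptT x {p \<in> parT x. case p of Cur y \<Rightarrow> y \<in> slice W t | Nxt y \<Rightarrow> y \<in> slice W (Suc t)}"
        using assms(1) tbn_set_eq[OF assms(1), of W par1 parT x]
        unfolding unr_cpt_def by simp
      have m: "(x, Suc t) \<in> W \<longleftrightarrow> x \<in> slice W (Suc t)" unfolding slice_def by simp
      show "fac W (x, Suc t) = (let S = {p \<in> parT x. case p of Cur y \<Rightarrow> y \<in> slice W t | Nxt y \<Rightarrow> y \<in> slice W (Suc t)}
             in if x \<in> slice W (Suc t) then cptT x S else 1 - cptT x S)"
        unfolding fac_def Let_def c m by (rule refl)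
    qed
    finally show ?thesis .
  qed
  have "J V par1 cpt1 parT cptT (Suc t) W = (\<Prod>n\<in>V \<times> {1..t}. fac W n) * (\<Prod>n\<in>V \<times> {Suc t}. fac W n)"
    unfolding J_fac split using assms by (intro prod.union_disjoint) (auto intro: finite_cartesian_product)
  then show ?thesis using p1 p2 by simp
qed

lemma J_1:
  assumes "W \<subseteq> V \<times> {1}"
  shows "J V par1 cpt1 parT cptT 1 W = bn_joint V par1 cpt1 (slice W 1)"
proof -
  have eq: "V \<times> {1..1} = (\<lambda>x. (x, 1::nat)) ` V" by auto
  have inj: "inj_on (\<lambda>x. (x, 1::nat)) V" by (auto simp: inj_on_def)
  define g where "g n = (if n \<in> W then unr_cpt cpt1 cptT n (W \<inter> unr_par par1 parT n)
      else 1 - unr_cpt cpt1 cptT n (W \<inter> unr_par par1 parT n))" for n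
  have "J V par1 cpt1 parT cptT 1 W = (\<Prod>n\<in>(\<lambda>x. (x, 1::nat)) ` V. g n)"
    unfolding J_def bn_joint_def g_def eq by (rule refl)
  also have "\<dots> = (\<Prod>x\<in>V. g (x,1))"
    by (rule prod.reindex[OF inj, unfolded comp_def])
  also have "\<dots> = (\<Prod>x\<in>V. (if (x,1) \<in> W then unr_cpt cpt1 cptT (x,1) (W \<inter> unr_par par1 parT (x,1))
      else 1 - unr_cpt cpt1 cptT (x,1) (W \<inter> unr_par par1 parT (x,1))))"
    unfolding g_def by (rule refl)
  also have "\<dots> = bn_joint V par1 cpt1 (slice W 1)"
    unfolding bn_joint_def
  proof (rule prod.cong[OF refl])
    fix x assume "x \<in> V"
    have s: "{y. (y, 1) \<in> W \<inter> unr_par par1 parT (x, 1)} = slice W 1 \<inter> par1 x"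
      unfolding unr_par_def slice_def by auto
    have c: "unr_cpt cpt1 cptT (x,1) (W \<inter> unr_par par1 parT (x,1)) = cpt1 x (slice W 1 \<inter> par1 x)"
      unfolding unr_cpt_def using s by simp
    have m: "(x,1) \<in> W \<longleftrightarrow> x \<in> slice W 1" unfolding slice_def by simp
    show "(if (x,1) \<in> W then unr_cpt cpt1 cptT (x,1) (W \<inter> unr_par par1 parT (x,1))
      else 1 - unr_cpt cpt1 cptT (x,1) (W \<inter> unr_par par1 parT (x,1)))
      = (if x \<in> slice W 1 then cpt1 x (slice W 1 \<inter> par1 x) else 1 - cpt1 x (slice W 1 \<inter> par1 x))"
      unfolding c m by (rule refl)
  qed
  finally show ?thesis .
qed

definition Paths where
  "Paths V Q t U = {W. W \<subseteq> V \<times> {1..Suc t} \<and> slice W (Suc t) = U \<and> (\<forall>i\<in>{1..Suc t}. Q (slice W i))}"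

lemma paths_sum:
  assumes "finite V" "U \<subseteq> V"
  shows "(\<Sum>W\<in>Paths V Q t U. J V par1 cpt1 parT cptT (Suc t) W)
     = Fw (Pow V) (tbn_trans V parT cptT) (bn_joint V par1 cpt1) Q t U"
  using assms(2)
proof (induction t arbitrary: U)
  case 0
  have P: "Paths V Q 0 U = (if Q U then {U \<times> {1}} else {})"
  proof (cases "Q U")
    case True
    have "Paths V Q 0 U = {U \<times> {1}}"
    proof
      show "Paths V Q 0 U \<subseteq> {U \<times> {1}}"
        unfolding Paths_def slice_def by auto
      show "{U \<times> {1}} \<subseteq> Paths V Q 0 U"
        unfolding Paths_def slice_def using True 0 by auto
    qed
    then show ?thesis using True by simp
  next
    case False
    then show ?thesis unfolding Paths_def slice_def by auto
  qed
  have "J V par1 cpt1 parT cptT 1 (U \<times> {1}) = bn_joint V par1 cpt1 U"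
  proof -
    have sub: "U \<times> {1} \<subseteq> V \<times> {1}" using 0 by auto
    have sl: "slice (U \<times> {1}) 1 = U" unfolding slice_def by auto
    have "J V par1 cpt1 parT cptT 1 (U \<times> {1}) = bn_joint V par1 cpt1 (slice (U \<times> {1}) 1)"
      by (rule J_1[OF sub])
    then show ?thesis unfolding sl .
  qed
  then show ?case using P by simp
next
  case (Suc t)
  let ?T = "tbn_trans V parT cptT"
  let ?J = "J V par1 cpt1 parT cptT"
  define A where "A = {W. W \<subseteq> V \<times> {1..Suc t} \<and> (\<forall>i\<in>{1..Suc t}. Q (slice W i))}"
  have finA: "finite A" 
    by (rule finite_subset[of _ "Pow (V \<times> {1..Suc t})"]) (auto simp: A_def assms(1))
  define ext where "ext W = W \<union> U \<times> {Suc (Suc t)}" for W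
  show ?case
  proof (cases "Q U")
    case False
    then have "Paths V Q (Suc t) U = {}" unfolding Paths_def by auto
    then show ?thesis using False by simp
  next
    case True
    have PE: "Paths V Q (Suc t) U = ext ` A"
    proof
      show "Paths V Q (Suc t) U \<subseteq> ext ` A"
      proof
        fix W assume W: "W \<in> Paths V Q (Suc t) U"
        let ?W' = "W \<inter> V \<times> {1..Suc t}"
        have "W = ext ?W'" using W unfolding Paths_def ext_def slice_def by (auto simp: le_Suc_eq)
        moreover have "?W' \<in> A"
        proof -
          have sub: "W \<subseteq> V \<times> {1..Suc (Suc t)}" using W unfolding Paths_def by auto
          have sl: "slice ?W' i = slice W i" if "i \<in> {1..Suc t}" for i
            using that sub unfolding slice_def by auto
          have "\<forall>i\<in>{1..Suc t}. Q (slice W i)" using W unfolding Paths_def by auto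
          then show ?thesis unfolding A_def using sl by auto
        qed
        ultimately show "W \<in> ext ` A" by blast
      qed
      show "ext ` A \<subseteq> Paths V Q (Suc t) U"
      proof
        fix W assume "W \<in> ext ` A"
        then obtain W' where W': "W' \<in> A" "W = ext W'" by blast
        have sl: "slice W i = slice W' i" if "i \<le> Suc t" for i
          using that unfolding W'(2) ext_def slice_def by auto
        have sl2: "slice W (Suc (Suc t)) = U"
          using W'(1) unfolding W'(2) ext_def slice_def A_def by auto
        have "W \<subseteq> V \<times> {1..Suc (Suc t)}" using W'(1) Suc.prems unfolding W'(2) ext_def A_def by auto
        moreover have "\<forall>i\<in>{1..Suc (Suc t)}. Q (slice W i)"
        proof
          fix i assume i: "i \<in> {1..Suc (Suc t)}"
          show "Q (slice W i)"
          proof (cases "i = Suc (Suc t)")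
            case True then show ?thesis using sl2 \<open>Q U\<close> by simp
          next
            case False
            then have "i \<le> Suc t" "i \<in> {1..Suc t}" using i by auto
            then show ?thesis using sl W'(1) unfolding A_def by auto
          qed
        qed
        ultimately show "W \<in> Paths V Q (Suc t) U" using sl2 unfolding Paths_def by auto
      qed
    qed
    have inj: "inj_on ext A"
    proof (rule inj_onI)
      fix X Y assume "X \<in> A" "Y \<in> A" "ext X = ext Y"
      then have "ext X \<inter> V \<times> {1..Suc t} = ext Y \<inter> V \<times> {1..Suc t}" by simp
      moreover have "ext Z \<inter> V \<times> {1..Suc t} = Z" if "Z \<in> A" for Z
        using that unfolding ext_def A_def by auto
      ultimately show "X = Y" using \<open>X \<in> A\<close> \<open>Y \<in> A\<close> by simp
    qed
    have Jext: "?J (Suc (Suc t)) (ext W) = ?J (Suc t) W * ?T (slice W (Suc t)) U" if "W \<in> A" for W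
    proof -
      have sub: "ext W \<subseteq> V \<times> {1..Suc (Suc t)}" using that Suc.prems unfolding ext_def A_def by auto
      have e1: "ext W \<inter> V \<times> {1..Suc t} = W" using that unfolding ext_def A_def by auto
      have e2: "slice (ext W) (Suc t) = slice W (Suc t)" unfolding ext_def slice_def by auto
      have e3: "slice (ext W) (Suc (Suc t)) = U" using that unfolding ext_def slice_def A_def by auto
      show ?thesis using J_Suc[of "Suc t" "ext W" V par1 cpt1 parT cptT] sub assms(1)
        unfolding e1 e2 e3 by simp
    qed
    have "(\<Sum>W\<in>Paths V Q (Suc t) U. ?J (Suc (Suc t)) W) = (\<Sum>W\<in>A. ?J (Suc (Suc t)) (ext W))"
      unfolding PE by (rule sum.reindex[OF inj, unfolded comp_def])
    also have "\<dots> = (\<Sum>W\<in>A. ?J (Suc t) W * ?T (slice W (Suc t)) U)"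
      by (rule sum.cong[OF refl]) (rule Jext)
    also have "\<dots> = (\<Sum>U'\<in>Pow V. \<Sum>W\<in>{W\<in>A. slice W (Suc t) = U'}. ?J (Suc t) W * ?T (slice W (Suc t)) U)"
      by (rule sum.group[symmetric]) (use finA assms(1) in \<open>auto simp: A_def slice_def\<close>)
    also have "\<dots> = (\<Sum>U'\<in>Pow V. (\<Sum>W\<in>Paths V Q t U'. ?J (Suc t) W) * ?T U' U)"
    proof (rule sum.cong[OF refl])
      fix U' assume "U' \<in> Pow V"
      have "{W\<in>A. slice W (Suc t) = U'} = Paths V Q t U'" unfolding A_def Paths_def by auto
      then show "(\<Sum>W\<in>{W\<in>A. slice W (Suc t) = U'}. ?J (Suc t) W * ?T (slice W (Suc t)) U)
          = (\<Sum>W\<in>Paths V Q t U'. ?J (Suc t) W) * ?T U' U"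
        by (simp add: sum_distrib_right Paths_def)
    qed
    also have "\<dots> = (\<Sum>U'\<in>Pow V. Fw (Pow V) ?T (bn_joint V par1 cpt1) Q t U' * ?T U' U)"
      by (rule sum.cong[OF refl]) (simp add: Suc.IH)
    finally show ?thesis using True by simp
  qed
qed

lemma bn_nonneg:
  assumes "bn_wf N par cpt" "W \<subseteq> N"
  shows "0 \<le> bn_joint N par cpt W"
  unfolding bn_joint_def
proof (rule prod_nonneg)
  fix n assume "n \<in> N"
  then have "0 \<le> cpt n (W \<inter> par n) \<and> cpt n (W \<inter> par n) \<le> 1"
    using assms(1) unfolding bn_wf_def by blast
  then show "0 \<le> (if n \<in> W then cpt n (W \<inter> par n) else 1 - cpt n (W \<inter> par n))" by auto
qed

lemma bn_total:
  assumes "bn_wf N par cpt"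
  shows "(\<Sum>W\<in>Pow N. bn_joint N par cpt W) = 1"
proof -
  have "(\<Sum>W\<in>Pow N. \<Prod>n\<in>N. if n\<in>W then (\<lambda>n W. cpt n (W \<inter> par n)) n W else 1 - (\<lambda>n W. cpt n (W \<inter> par n)) n W) = (1::real)"
    by (rule bn_sum1) (use assms in \<open>auto simp: bn_wf_def Int_assoc\<close>)
  then show ?thesis unfolding bn_joint_def by simp
qed

definition tsel where
  "tsel parT x W U = {p \<in> parT x. case p of Cur y \<Rightarrow> y \<in> W | Nxt y \<Rightarrow> y \<in> U}"

lemma tbn_trans_alt:
  "tbn_trans V parT cptT W U = (\<Prod>x\<in>V. if x \<in> U then cptT x (tsel parT x W U) else 1 - cptT x (tsel parT x W U))"
  unfolding tbn_trans_def tsel_def Let_def by (rule refl)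

lemma tbn_nonneg:
  assumes "tbn_wf V parT cptT"
  shows "0 \<le> tbn_trans V parT cptT W U"
  unfolding tbn_trans_alt
proof (rule prod_nonneg)
  fix x assume "x \<in> V"
  moreover have "tsel parT x W U \<subseteq> parT x" unfolding tsel_def by auto
  ultimately have "0 \<le> cptT x (tsel parT x W U) \<and> cptT x (tsel parT x W U) \<le> 1"
    using assms unfolding tbn_wf_def by blast
  then show "0 \<le> (if x \<in> U then cptT x (tsel parT x W U) else 1 - cptT x (tsel parT x W U))" by auto
qed

lemma tbn_acyc:
  assumes "acyclic {(p, Nxt x) | p x. x \<in> V \<and> p \<in> parT x}"
  shows "acyclic {(q,n). n \<in> V \<and> q \<in> {y. Nxt y \<in> parT n}}"
proof -
  let ?R = "{(q,n). n \<in> V \<and> q \<in> {y. Nxt y \<in> parT n}}"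
  let ?Rt = "{(p, Nxt x) | p x. x \<in> V \<and> p \<in> parT x}"
  have "(Nxt a, Nxt b) \<in> ?Rt\<^sup>+" if "(a,b) \<in> ?R\<^sup>+" for a b
    using that
  proof (induction rule: trancl_induct)
    case (base y) then show ?case by blast
  next
    case (step y z)
    then have "(Nxt y, Nxt z) \<in> ?Rt" by blast
    then show ?case using step.IH by (meson trancl.trancl_into_trancl)
  qed
  then show ?thesis using assms unfolding acyclic_def by blast
qed

lemma tbn_total:
  assumes "tbn_wf V parT cptT"
  shows "(\<Sum>U\<in>Pow V. tbn_trans V parT cptT W U) = 1"
proof -
  have "(\<Sum>U\<in>Pow V. \<Prod>x\<in>V. if x\<in>U then (\<lambda>x U. cptT x (tsel parT x W U)) x U else 1 - (\<lambda>x U. cptT x (tsel parT x W U)) x U) = (1::real)"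
  proof (rule bn_sum1[where par = "\<lambda>x. {y. Nxt y \<in> parT x}"])
    show "finite V" using assms unfolding tbn_wf_def by blast
    show "acyclic {(q,n). n \<in> V \<and> q \<in> {y. Nxt y \<in> parT n}}"
      using assms tbn_acyc unfolding tbn_wf_def by blast
    show "\<forall>n\<in>V. \<forall>U. cptT n (tsel parT n W U) = cptT n (tsel parT n W (U \<inter> {y. Nxt y \<in> parT n}))"
    proof (intro ballI allI)
      fix n U
      have "tsel parT n W U = tsel parT n W (U \<inter> {y. Nxt y \<in> parT n})"
        unfolding tsel_def by (auto split: tnode.splits)
      then show "cptT n (tsel parT n W U) = cptT n (tsel parT n W (U \<inter> {y. Nxt y \<in> parT n}))" by simp
    qed
  qed
  then show ?thesis unfolding tbn_trans_alt by simp
qed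

theorem mainTheorem3:
  fixes V :: "'v set"
    and Ont :: "'a set set" and Itp :: "'i set"
    and sa :: "'i \<Rightarrow> 'a \<Rightarrow> bool" and sc :: "'i \<Rightarrow> 'c \<Rightarrow> bool"
    and Ov :: "('a \<times> ('v \<times> bool) set) set" and c :: 'c and \<phi> :: "'v pform"
    and par1 :: "'v \<Rightarrow> 'v set" and cpt1 :: "'v \<Rightarrow> 'v set \<Rightarrow> real"
    and parT :: "'v \<Rightarrow> 'v tnode set" and cptT :: "'v \<Rightarrow> 'v tnode set \<Rightarrow> real"
  assumes "finite V"
    and "ontology_language Ont"
    and "V_ontology V Ont Ov"
    and "bn_wf V par1 cpt1"
    and "tbn_wf V parT cptT"
    and "context_formula V Itp sa sc Ov c \<phi>"
    and "delta V parT cptT \<phi> > 0"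
  shows "(\<lambda>t. prob_within V par1 cpt1 parT cptT Itp sa sc Ov c t) \<longlonglongrightarrow> 1"
proof -
  note finV = assms(1) and bn = assms(4) and tbn = assms(5) and cf = assms(6) and dpos = assms(7)
  let ?S = "Pow V"
  let ?T = "tbn_trans V parT cptT"
  let ?mu = "bn_joint V par1 cpt1"
  let ?Q = "\<lambda>U. \<not> peval U \<phi>"
  let ?J = "J V par1 cpt1 parT cptT"
  have finS: "finite ?S" using finV by simp
  have Tnn: "\<And>W U. W \<in> ?S \<Longrightarrow> U \<in> ?S \<Longrightarrow> 0 \<le> ?T W U" using tbn_nonneg[OF tbn] by blast
  have Trow: "\<And>W. W \<in> ?S \<Longrightarrow> (\<Sum>U\<in>?S. ?T W U) = 1" using tbn_total[OF tbn] by blast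
  have munn: "\<And>U. U \<in> ?S \<Longrightarrow> 0 \<le> ?mu U" using bn_nonneg[OF bn] by blast
  have musum: "(\<Sum>U\<in>?S. ?mu U) = 1" using bn_total[OF bn] .
  have pos: "(\<Sum>U\<in>{U\<in>?S. \<not> ?Q U}. P U) > 0"
    if "\<forall>U\<in>?S. 0 \<le> P U" "(\<Sum>U\<in>?S. P U) = 1" "\<forall>U\<in>?S. (\<Sum>W\<in>?S. ?T W U * P W) = P U" for P
  proof -
    have st: "stationary V parT cptT P" unfolding stationary_def using that by blast
    let ?X = "{(\<Sum>W\<in>{W\<in>Pow V. peval W \<phi>}. P W) | P. stationary V parT cptT P}"
    have bdd: "bdd_below ?X"
    proof (rule bdd_belowI)
      fix x assume "x \<in> ?X"
      then obtain P' where "x = (\<Sum>W\<in>{W\<in>Pow V. peval W \<phi>}. P' W)" "stationary V parT cptT P'" by blast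
      then show "0 \<le> x" unfolding stationary_def by (auto intro!: sum_nonneg)
    qed
    have mem: "(\<Sum>W\<in>{W\<in>Pow V. peval W \<phi>}. P W) \<in> ?X" using st by blast
    have "Inf ?X \<le> (\<Sum>W\<in>{W\<in>Pow V. peval W \<phi>}. P W)" by (rule cInf_lower[OF mem bdd])
    then have "delta V parT cptT \<phi> \<le> (\<Sum>W\<in>{W\<in>Pow V. peval W \<phi>}. P W)" unfolding delta_def .
    then show ?thesis using dpos by simp
  qed
  have lim0: "(\<lambda>t. \<Sum>U\<in>?S. Fw ?S ?T ?mu ?Q t U) \<longlonglongrightarrow> 0"
    by (rule F_tends0[OF finS Tnn Trow munn musum pos]) blast+
  have ent: "entails Itp sa sc (restrict_ont Ov U) c \<longleftrightarrow> peval U \<phi>" if "U \<subseteq> V" for U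
    using cf that unfolding context_formula_def by blast
  have pw: "prob_within V par1 cpt1 parT cptT Itp sa sc Ov c (Suc t) = 1 - (\<Sum>U\<in>?S. Fw ?S ?T ?mu ?Q t U)" for t
  proof -
    define Z where "Z = Pow (V \<times> {1..Suc t})"
    define Nn where "Nn = {W\<in>Z. \<forall>i\<in>{1..Suc t}. ?Q (slice W i)}"
    have finZ: "finite Z" unfolding Z_def using finV by simp
    have NZ: "Nn \<subseteq> Z" unfolding Nn_def by auto
    have Hset: "{W. W \<subseteq> V \<times> {1..Suc t} \<and> (\<exists>i\<in>{1..Suc t}. entails Itp sa sc (restrict_ont Ov (slice W i)) c)} = Z - Nn"
    proof -
      have "entails Itp sa sc (restrict_ont Ov (slice W i)) c \<longleftrightarrow> peval (slice W i) \<phi>"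
        if "W \<subseteq> V \<times> {1..Suc t}" for W i
        by (rule ent) (rule slice_mono[OF that])
      then show ?thesis unfolding Z_def Nn_def by auto
    qed
    have grp: "(\<Sum>W\<in>B. ?J (Suc t) W) = (\<Sum>U\<in>?S. \<Sum>W\<in>{W\<in>B. slice W (Suc t) = U}. ?J (Suc t) W)"
      if "B \<subseteq> Z" for B
    proof (rule sum.group[symmetric])
      show "finite B" using finZ that finite_subset by blast
      show "finite ?S" using finS .
      show "(\<lambda>W. slice W (Suc t)) ` B \<subseteq> ?S" using that unfolding Z_def slice_def by auto
    qed
    have sZ: "(\<Sum>W\<in>Z. ?J (Suc t) W) = 1"
    proof -
      have "(\<Sum>W\<in>Z. ?J (Suc t) W) = (\<Sum>U\<in>?S. \<Sum>W\<in>Paths V (\<lambda>_. True) t U. ?J (Suc t) W)"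
        unfolding grp[OF order_refl] by (rule sum.cong[OF refl]) (auto simp: Z_def Paths_def intro!: sum.cong)
      also have "\<dots> = (\<Sum>U\<in>?S. Fw ?S ?T ?mu (\<lambda>_. True) t U)"
        by (rule sum.cong[OF refl]) (rule paths_sum[OF finV], blast)
      also have "\<dots> = 1" by (rule F_total[OF finS Tnn Trow munn musum]) blast+
      finally show ?thesis .
    qed
    have sN: "(\<Sum>W\<in>Nn. ?J (Suc t) W) = (\<Sum>U\<in>?S. Fw ?S ?T ?mu ?Q t U)"
    proof -
      have "(\<Sum>W\<in>Nn. ?J (Suc t) W) = (\<Sum>U\<in>?S. \<Sum>W\<in>Paths V ?Q t U. ?J (Suc t) W)"
        unfolding grp[OF NZ] by (rule sum.cong[OF refl]) (auto simp: Z_def Nn_def Paths_def intro!: sum.cong)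
      also have "\<dots> = (\<Sum>U\<in>?S. Fw ?S ?T ?mu ?Q t U)"
        by (rule sum.cong[OF refl]) (rule paths_sum[OF finV], blast)
      finally show ?thesis .
    qed
    have "prob_within V par1 cpt1 parT cptT Itp sa sc Ov c (Suc t) = (\<Sum>W\<in>Z - Nn. ?J (Suc t) W)"
      unfolding prob_within_def Hset J_def by (rule refl)
    also have "\<dots> = (\<Sum>W\<in>Z. ?J (Suc t) W) - (\<Sum>W\<in>Nn. ?J (Suc t) W)"
      by (rule sum_diff[OF finZ NZ])
    finally show ?thesis using sZ sN by simp
  qed
  have "(\<lambda>t. 1 - (\<Sum>U\<in>?S. Fw ?S ?T ?mu ?Q t U)) \<longlonglongrightarrow> 1 - 0"
    by (rule tendsto_diff[OF tendsto_const lim0])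
  then have "(\<lambda>t. prob_within V par1 cpt1 parT cptT Itp sa sc Ov c (Suc t)) \<longlonglongrightarrow> 1"
    unfolding pw by simp
  then show ?thesis by (rule LIMSEQ_imp_Suc)
qed

end
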